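(* Let $\alpha=\frac14$, $\zeta=e^{-2\pi i\alpha}=-i$, $\mathcal A_3=\{-2,0,2\}$, and let $L_{-2},L_0,L_2$ be the operators on $\mathbb{C}^{\mathcal A_3}$ defined in the context. Let $\Gamma_3$ be the Zariski closure of the group generated by $L_{-2},L_0,L_2$, let $e$ span the kernel of $Q_{1/4}$, and let $H_{-2}=\mathrm{span}(e_0,e_2)$. Then for every $\mathbb{C}$-linear functional $v$ on $H_{-2}$, the linear map $T_v$ of $\mathbb{C}^{\mathcal A_3}$ defined by $T_v(e)=e$ and $T_v(h)=h+v(h)e$ for $h\in H_{-2}$ belongs to $\Gamma_3$.
   Context: $(e_q)_{q\in\mathcal A_3}$ is the canonical basis. For $p\in\mathcal A_3$, $L_p(e_q)=e_q-e_p$ if $q>p$, $L_p(e_q)=e_q-\zeta e_p$ if $q<p$, $L_p(e_p)=-\zeta e_p$. $Q_{1/4}$ is the hermitian form (linear in the first argument, conjugate-linear in the second) with $Q_{1/4}(e_p,e_p)=1$ and $Q_{1/4}(e_p,e_{p'})=(1+\zeta)^{-1}=\frac12(1+i)$ for $p>p'$; it is degenerate with a one-dimensional kernel spanned by a vector $e$ all of whose coordinates are nonzero, so $\mathbb{C}^{\mathcal A_3}=\mathbb{C}e\oplus H_{-2}$. In the paper's notation, the statement says that the kernel $K=\{v\in (H_{-2})^*: T_v\in\Gamma_3\}$ equals $(H_{-2})^*$. *)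

theory Defs
  imports "HOL-Analysis.Analysis"
begin

text \<open>The index set A_3 = {-2,0,2}, as a three-element type, with its
  integer labels (which carry the order used in the definition of L_p).\<close>

datatype A3 = Am2 | A0 | A2

lemma UNIV_A3: "(UNIV :: A3 set) = {Am2, A0, A2}"
  using A3.exhaust by auto

instance A3 :: finite
  by standard (simp add: UNIV_A3)

fun idx :: "A3 \<Rightarrow> int" where
  "idx Am2 = -2" | "idx A0 = 0" | "idx A2 = 2"

definition alpha :: real where "alpha = 1/4"

definition zeta :: complex where "zeta = exp (- 2 * pi * \<i> * complex_of_real alpha)"

text \<open>Canonical basis vector e_q.\<close>
definition ebas :: "A3 \<Rightarrow> complex^A3" where
  "ebas q = (\<chi> i. if i = q then 1 else 0)"

text \<open>Matrix of L_p: column q is L_p(e_q), i.e. entry (i,q) is the i-th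
  coordinate of L_p(e_q).\<close>
definition Lop :: "A3 \<Rightarrow> complex^A3^A3" where
  "Lop p = (\<chi> i q.
     if q = p then (if i = p then - zeta else 0)
     else if idx q > idx p then (if i = q then 1 else if i = p then -1 else 0)
     else (if i = q then 1 else if i = p then - zeta else 0))"

text \<open>Gram coefficients of the hermitian form Q_{1/4}.\<close>
definition Qcoef :: "A3 \<Rightarrow> A3 \<Rightarrow> complex" where
  "Qcoef p p' = (if p = p' then 1
                 else if idx p > idx p' then inverse (1 + zeta)
                 else cnj (inverse (1 + zeta)))"

text \<open>Q(x,y), linear in x, conjugate-linear in y.\<close>
definition Qform :: "complex^A3 \<Rightarrow> complex^A3 \<Rightarrow> complex" where
  "Qform x y = (\<Sum>p\<in>UNIV. \<Sum>p'\<in>UNIV. x$p * cnj (y$p') * Qcoef p p')"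

definition Qkernel :: "(complex^A3) set" where
  "Qkernel = {x. \<forall>y. Qform x y = 0}"

text \<open>H_{-2} = span(e_0, e_2).\<close>
definition Hm2 :: "(complex^A3) set" where
  "Hm2 = span {ebas A0, ebas A2}"

text \<open>Subgroup of GL generated by a set of (invertible) matrices.\<close>
inductive_set gen_group :: "(complex^'n^'n) set \<Rightarrow> (complex^'n^'n) set"
  for S :: "(complex^'n^'n) set" where
  gg_one: "mat 1 \<in> gen_group S"
| gg_gen: "A \<in> S \<Longrightarrow> A \<in> gen_group S"
| gg_inv: "A \<in> S \<Longrightarrow> matrix_inv A \<in> gen_group S"
| gg_mult: "A \<in> gen_group S \<Longrightarrow> B \<in> gen_group S \<Longrightarrow> A ** B \<in> gen_group S"

text \<open>Polynomial functions (with complex coefficients) in the matrix entries.\<close>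
inductive_set poly_fun :: "(complex^'n^'n \<Rightarrow> complex) set" where
  pf_const: "(\<lambda>M. c) \<in> poly_fun"
| pf_entry: "(\<lambda>M. M $ i $ j) \<in> poly_fun"
| pf_add: "f \<in> poly_fun \<Longrightarrow> g \<in> poly_fun \<Longrightarrow> (\<lambda>M. f M + g M) \<in> poly_fun"
| pf_mult: "f \<in> poly_fun \<Longrightarrow> g \<in> poly_fun \<Longrightarrow> (\<lambda>M. f M * g M) \<in> poly_fun"

text \<open>Zariski closure in the space of matrices: common zeros of all polynomials
  vanishing on S.\<close>
definition zariski_closure :: "(complex^'n^'n) set \<Rightarrow> (complex^'n^'n) set" where
  "zariski_closure S = {M. \<forall>f\<in>poly_fun. (\<forall>N\<in>S. f N = 0) \<longrightarrow> f M = 0}"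

definition Gamma3 :: "(complex^A3^A3) set" where
  "Gamma3 = zariski_closure (gen_group {Lop Am2, Lop A0, Lop A2})"

end

theory Submission
  imports Defs "HOL-Computational_Algebra.Polynomial"
begin

lemma all_A3: "(\<forall>x::A3. P x) = (P Am2 \<and> P A0 \<and> P A2)"
  by (metis A3.exhaust)

lemma sum_A3: "(\<Sum>x\<in>(UNIV::A3 set). f x) = f Am2 + f A0 + f A2"
  by (simp add: UNIV_A3 add.assoc)

definition M3 :: "complex \<Rightarrow> complex \<Rightarrow> complex \<Rightarrow> complex \<Rightarrow> complex \<Rightarrow> complex \<Rightarrow> complex \<Rightarrow> complex \<Rightarrow> complex \<Rightarrow> complex^A3^A3" where
  "M3 a b c d e f g h k = (\<chi> i j. case i of
      Am2 \<Rightarrow> (case j of Am2 \<Rightarrow> a | A0 \<Rightarrow> b | A2 \<Rightarrow> c)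
    | A0 \<Rightarrow> (case j of Am2 \<Rightarrow> d | A0 \<Rightarrow> e | A2 \<Rightarrow> f)
    | A2 \<Rightarrow> (case j of Am2 \<Rightarrow> g | A0 \<Rightarrow> h | A2 \<Rightarrow> k))"

lemma M3_nth:
  "M3 a b c d e f g h k $ Am2 $ Am2 = a" "M3 a b c d e f g h k $ Am2 $ A0 = b" "M3 a b c d e f g h k $ Am2 $ A2 = c"
  "M3 a b c d e f g h k $ A0 $ Am2 = d" "M3 a b c d e f g h k $ A0 $ A0 = e" "M3 a b c d e f g h k $ A0 $ A2 = f"
  "M3 a b c d e f g h k $ A2 $ Am2 = g" "M3 a b c d e f g h k $ A2 $ A0 = h" "M3 a b c d e f g h k $ A2 $ A2 = k"
  by (simp_all add: M3_def)

lemma M3_eq: "(M3 a b c d e f g h k = M3 a' b' c' d' e' f' g' h' k') =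
   (a = a' \<and> b = b' \<and> c = c' \<and> d = d' \<and> e = e' \<and> f = f' \<and> g = g' \<and> h = h' \<and> k = k')"
  by (auto simp: vec_eq_iff all_A3 M3_nth)

lemma M3_mult: "M3 a b c d e f g h k ** M3 a' b' c' d' e' f' g' h' k' =
  M3 (a*a'+b*d'+c*g') (a*b'+b*e'+c*h') (a*c'+b*f'+c*k')
     (d*a'+e*d'+f*g') (d*b'+e*e'+f*h') (d*c'+e*f'+f*k')
     (g*a'+h*d'+k*g') (g*b'+h*e'+k*h') (g*c'+h*f'+k*k')"
  by (simp add: vec_eq_iff all_A3 M3_nth matrix_matrix_mult_def sum_A3)

lemma zeta_val: "zeta = - \<i>"
proof -
  have "zeta = exp (\<i> * complex_of_real (-(pi/2)))"
    unfolding zeta_def alpha_def by (rule arg_cong[where f=exp]) (simp add: field_simps)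
  also have "\<dots> = cis (-(pi/2))" by (simp add: cis_conv_exp)
  finally show ?thesis by simp
qed

lemma Lops:
  "Lop Am2 = M3 \<i> (-1) (-1) 0 1 0 0 0 1"
  "Lop A0 = M3 1 0 0 \<i> \<i> (-1) 0 0 1"
  "Lop A2 = M3 1 0 0 0 1 0 \<i> \<i> \<i>"
  by (simp_all add: vec_eq_iff all_A3 M3_nth Lop_def zeta_val)

lemma gstep: "A \<in> gen_group S \<Longrightarrow> B \<in> S \<Longrightarrow> A ** B = C \<Longrightarrow> C \<in> gen_group S"
  using gen_group.gg_mult gen_group.gg_gen by blast

definition TT :: "complex \<Rightarrow> complex \<Rightarrow> complex^A3^A3" where
  "TT s t = M3 (1 + s - \<i> * t) t s (\<i> * s + t) (1 + \<i> * t) (\<i> * s) (-s + \<i> * t) (-t) (1 - s)"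

lemma TT_mult: "TT a b ** TT c d = TT (a+c) (b+d)"
  unfolding TT_def M3_mult M3_eq by (simp add: algebra_simps)

lemma W_in: "TT 1 0 \<in> gen_group {Lop Am2, Lop A0, Lop A2}" "TT 0 1 \<in> gen_group {Lop Am2, Lop A0, Lop A2}"
proof -
  define S where "S = {Lop Am2, Lop A0, Lop A2}"
  have W1_1: "M3 (1 * \<i>) (-1) (-1) (0) (1) (0) (0) (0) (1) \<in> gen_group S"
    using gen_group.gg_gen[of "Lop Am2" S] by (simp add: S_def Lops)
  have W1_2: "M3 (-1) (-1 + -1 * \<i>) (-1 + -1 * \<i>) (0) (1) (0) (0) (0) (1) \<in> gen_group S"
    by (rule gstep[OF W1_1, of "Lop Am2"]) (simp add: S_def, simp add: Lops M3_mult M3_eq complex_eq_iff)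
  have W1_3: "M3 (-1 * \<i>) (1 + -1 * \<i>) (0) (1 * \<i>) (1 * \<i>) (-1) (0) (0) (1) \<in> gen_group S"
    by (rule gstep[OF W1_2, of "Lop A0"]) (simp add: S_def, simp add: Lops M3_mult M3_eq complex_eq_iff)
  have W1_4: "M3 (1) (1 + 1 * \<i>) (-1 + 1 * \<i>) (-1 + 1 * \<i>) (-1) (-1 + -1 * \<i>) (0) (0) (1) \<in> gen_group S"
    by (rule gstep[OF W1_3, of "Lop A0"]) (simp add: S_def, simp add: Lops M3_mult M3_eq complex_eq_iff)
  have W1_5: "M3 (1 * \<i>) (-1 + 1 * \<i>) (-2) (-1) (-1 * \<i>) (-1 * \<i>) (0) (0) (1) \<in> gen_group S"
    by (rule gstep[OF W1_4, of "Lop A0"]) (simp add: S_def, simp add: Lops M3_mult M3_eq complex_eq_iff)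
  have W1_6: "M3 (-1) (-1) (-2 + -1 * \<i>) (-1 * \<i>) (1 + -1 * \<i>) (1 + -1 * \<i>) (0) (0) (1) \<in> gen_group S"
    by (rule gstep[OF W1_5, of "Lop Am2"]) (simp add: S_def, simp add: Lops M3_mult M3_eq complex_eq_iff)
  have W1_7: "M3 (-2 * \<i>) (-2 * \<i>) (1 + -2 * \<i>) (1) (2) (1 + 1 * \<i>) (1 * \<i>) (1 * \<i>) (1 * \<i>) \<in> gen_group S"
    by (rule gstep[OF W1_6, of "Lop A2"]) (simp add: S_def, simp add: Lops M3_mult M3_eq complex_eq_iff)
  have W1_8: "M3 (2) (0) (1) (1 * \<i>) (1) (1 * \<i>) (-1) (0) (0) \<in> gen_group S"
    by (rule gstep[OF W1_7, of "Lop Am2"]) (simp add: S_def, simp add: Lops M3_mult M3_eq complex_eq_iff)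
  have W2_1: "M3 (1) (0) (0) (1 * \<i>) (1 * \<i>) (-1) (0) (0) (1) \<in> gen_group S"
    using gen_group.gg_gen[of "Lop A0" S] by (simp add: S_def Lops)
  have W2_2: "M3 (1) (0) (0) (-1 + 1 * \<i>) (-1) (-1 + -1 * \<i>) (0) (0) (1) \<in> gen_group S"
    by (rule gstep[OF W2_1, of "Lop A0"]) (simp add: S_def, simp add: Lops M3_mult M3_eq complex_eq_iff)
  have W2_3: "M3 (1) (0) (0) (0) (-1 * \<i>) (1 + -1 * \<i>) (1 * \<i>) (1 * \<i>) (1 * \<i>) \<in> gen_group S"
    by (rule gstep[OF W2_2, of "Lop A2"]) (simp add: S_def, simp add: Lops M3_mult M3_eq complex_eq_iff)
  have W2_4: "M3 (1) (0) (0) (1) (1) (1) (-1 + 1 * \<i>) (-1) (0) \<in> gen_group S"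
    by (rule gstep[OF W2_3, of "Lop A0"]) (simp add: S_def, simp add: Lops M3_mult M3_eq complex_eq_iff)
  have W2_5: "M3 (1 * \<i>) (-1) (-1) (1 * \<i>) (0) (0) (-1 + -1 * \<i>) (-1 * \<i>) (1 + -1 * \<i>) \<in> gen_group S"
    by (rule gstep[OF W2_4, of "Lop Am2"]) (simp add: S_def, simp add: Lops M3_mult M3_eq complex_eq_iff)
  have W2_6: "M3 (-1) (-1 + -1 * \<i>) (-1 + -1 * \<i>) (-1) (-1 * \<i>) (-1 * \<i>) (1 + -1 * \<i>) (1) (2) \<in> gen_group S"
    by (rule gstep[OF W2_5, of "Lop Am2"]) (simp add: S_def, simp add: Lops M3_mult M3_eq complex_eq_iff)
  have W2_7: "M3 (-1 * \<i>) (-1 * \<i>) (-1 * \<i>) (-1 * \<i>) (1 + -1 * \<i>) (1 + -1 * \<i>) (1 + 1 * \<i>) (1 * \<i>) (1 + 1 * \<i>) \<in> gen_group S"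
    by (rule gstep[OF W2_6, of "Lop Am2"]) (simp add: S_def, simp add: Lops M3_mult M3_eq complex_eq_iff)
  have W2_8: "M3 (1 + -1 * \<i>) (1) (0) (1) (1 + 1 * \<i>) (0) (1 * \<i>) (-1) (1) \<in> gen_group S"
    by (rule gstep[OF W2_7, of "Lop A0"]) (simp add: S_def, simp add: Lops M3_mult M3_eq complex_eq_iff)
  have "TT 1 0 = M3 (2) (0) (1) (1 * \<i>) (1) (1 * \<i>) (-1) (0) (0)"
    by (simp add: TT_def M3_eq)
  with W1_8 show "TT 1 0 \<in> gen_group {Lop Am2, Lop A0, Lop A2}" by (simp add: S_def)
  have "TT 0 1 = M3 (1 + -1 * \<i>) (1) (0) (1) (1 + 1 * \<i>) (0) (1 * \<i>) (-1) (1)"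
    by (simp add: TT_def M3_eq)
  with W2_8 show "TT 0 1 \<in> gen_group {Lop Am2, Lop A0, Lop A2}" by (simp add: S_def)
qed


lemma poly_fun_aff:
  fixes A B :: "complex^'n^'n"
  shows "f \<in> poly_fun \<Longrightarrow> \<exists>p. \<forall>x. f (\<chi> i j. A$i$j + x * B$i$j) = poly p x"
proof (induction rule: poly_fun.induct)
  case (pf_const c)
  show ?case by (rule exI[of _ "[:c:]"]) simp
next
  case (pf_entry i j)
  show ?case by (rule exI[of _ "[:A$i$j, B$i$j:]"]) (simp add: mult.commute)
next
  case (pf_add f g)
  then obtain p q where "\<forall>x. f (\<chi> i j. A$i$j + x * B$i$j) = poly p x"
    "\<forall>x. g (\<chi> i j. A$i$j + x * B$i$j) = poly q x" by blast
  then show ?case by (intro exI[of _ "p + q"]) simp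
next
  case (pf_mult f g)
  then obtain p q where "\<forall>x. f (\<chi> i j. A$i$j + x * B$i$j) = poly p x"
    "\<forall>x. g (\<chi> i j. A$i$j + x * B$i$j) = poly q x" by blast
  then show ?case by (intro exI[of _ "p * q"]) simp
qed

lemma poly_zero_nat:
  fixes p :: "complex poly"
  assumes "\<forall>n::nat. poly p (of_nat n) = 0"
  shows "\<forall>x. poly p x = 0"
proof (cases "p = 0")
  case False
  have "range (of_nat :: nat \<Rightarrow> complex) \<subseteq> {x. poly p x = 0}" using assms by auto
  moreover have "infinite (range (of_nat :: nat \<Rightarrow> complex))"
    by (rule range_inj_infinite) (simp add: inj_of_nat)
  ultimately have "infinite {x. poly p x = 0}" using infinite_super by blast
  with poly_roots_finite[OF False] show ?thesis by simp
qed simp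

lemma TT_aff1: "TT x t = (\<chi> i j. (TT 0 t)$i$j + x * (M3 1 0 1 \<i> 0 \<i> (-1) 0 (-1))$i$j)"
  by (simp add: vec_eq_iff all_A3 M3_nth TT_def algebra_simps)

lemma TT_aff2: "TT s x = (\<chi> i j. (TT s 0)$i$j + x * (M3 (-\<i>) 1 0 1 \<i> 0 \<i> (-1) 0)$i$j)"
  by (simp add: vec_eq_iff all_A3 M3_nth TT_def algebra_simps)

lemma TT_vanish:
  assumes f: "f \<in> poly_fun" and z: "\<forall>n m::nat. f (TT (of_nat n) (of_nat m)) = 0"
  shows "f (TT s t) = 0"
proof -
  have 1: "f (TT x (of_nat m)) = 0" for x m
  proof -
    obtain p where p: "\<forall>x. f (\<chi> i j. (TT 0 (of_nat m))$i$j + x * (M3 1 0 1 \<i> 0 \<i> (-1) 0 (-1))$i$j) = poly p x"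
      using poly_fun_aff[OF f] by blast
    have "\<forall>n::nat. poly p (of_nat n) = 0" using z p TT_aff1 by metis
    then show ?thesis using poly_zero_nat p TT_aff1 by metis
  qed
  obtain p where p: "\<forall>x. f (\<chi> i j. (TT s 0)$i$j + x * (M3 (-\<i>) 1 0 1 \<i> 0 \<i> (-1) 0)$i$j) = poly p x"
    using poly_fun_aff[OF f] by blast
  have "\<forall>n::nat. poly p (of_nat n) = 0" using 1 p TT_aff2 by metis
  then show ?thesis using poly_zero_nat p TT_aff2 by metis
qed

lemma TT_00: "TT 0 0 = mat 1"
  by (simp add: vec_eq_iff all_A3 M3_nth TT_def mat_def)

lemma TT_nat: "TT (of_nat n) (of_nat m) \<in> gen_group {Lop Am2, Lop A0, Lop A2}"
proof (induction n)
  case 0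
  show ?case
  proof (induction m)
    case 0 then show ?case using TT_00 gen_group.gg_one by simp
  next
    case (Suc m)
    have "TT 0 1 ** TT 0 (of_nat m) \<in> gen_group {Lop Am2, Lop A0, Lop A2}"
      by (rule gen_group.gg_mult[OF W_in(2)]) (use Suc in simp)
    then show ?case by (simp add: TT_mult add.commute)
  qed
next
  case (Suc n)
  have "TT 1 0 ** TT (of_nat n) (of_nat m) \<in> gen_group {Lop Am2, Lop A0, Lop A2}"
    by (rule gen_group.gg_mult[OF W_in(1) Suc])
  then show ?case by (simp add: TT_mult add.commute)
qed

lemma TT_Gamma: "TT s t \<in> Gamma3"
  unfolding Gamma3_def zariski_closure_def
  using TT_vanish TT_nat by blast

lemma inv_q: "inverse (1 + zeta) = (1 + \<i>) / 2"
  by (simp add: zeta_val complex_eq_iff)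

theorem mainTheorem16:
  fixes e :: "complex^A3" and v :: "complex^A3 \<Rightarrow> complex" and T :: "complex^A3^A3"
  assumes e_ker: "e \<in> Qkernel" and e_nz: "e \<noteq> 0"
    and ker_dim: "\<forall>x\<in>Qkernel. \<exists>c. x = c *s e"
    and v_add: "\<forall>x y. v (x + y) = v x + v y"
    and v_scale: "\<forall>(c::complex) x. v (c *s x) = c * v x"
    and T_e: "T *v e = e"
    and T_H: "\<forall>h\<in>Hm2. T *v h = h + v h *s e"
  shows "T \<in> Gamma3"
proof -
  define a where "a = e $ Am2"
  define b where "b = e $ A0"
  define c where "c = e $ A2"
  have Qe: "Qform e (ebas j) = 0" for j using e_ker by (simp add: Qkernel_def)
  have cq: "cnj ((1 + \<i>) / 2) = (1 - \<i>) / 2" by (simp add: complex_eq_iff)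
  have E1: "a + b * ((1 + \<i>) / 2) + c * ((1 + \<i>) / 2) = 0"
    using Qe[of Am2] by (simp add: Qform_def sum_A3 ebas_def Qcoef_def inv_q cq a_def b_def c_def)
  have E3: "a * ((1 - \<i>) / 2) + b * ((1 - \<i>) / 2) + c = 0"
    using Qe[of A2] by (simp add: Qform_def sum_A3 ebas_def Qcoef_def inv_q cq a_def b_def c_def)
  have R1a: "Re a + ((Re b - Im b) / 2 + (Re c - Im c) / 2) = 0 \<and> Im a + ((Im b + Re b) / 2 + (Im c + Re c) / 2) = 0"
    using E1 by (simp add: complex_eq_iff algebra_simps)
  have R3a: "Re ((a * ((1 - \<i>) / 2) + b * ((1 - \<i>) / 2) + c)) = 0 \<and> Im ((a * ((1 - \<i>) / 2) + b * ((1 - \<i>) / 2) + c)) = 0"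
    using E3 by simp
  then have R3b: "(Re a + Im a) / 2 + (Re b + Im b) / 2 + Re c = 0 \<and> (Im a - Re a) / 2 + (Im b - Re b) / 2 + Im c = 0"
    by (simp add: algebra_simps)
  have Rb1: "Re b = - Im a" using R1a R3b by (simp only: add_divide_distrib diff_divide_distrib) linarith
  have Rb2: "Im b = Re a" using R1a R3b by (simp only: add_divide_distrib diff_divide_distrib) linarith
  have Rb3: "Re c = - Re a" using R1a R3b by (simp only: add_divide_distrib diff_divide_distrib) linarith
  have Rb4: "Im c = - Im a" using R1a R3b by (simp only: add_divide_distrib diff_divide_distrib) linarith
  note Rb = Rb1 Rb2 Rb3 Rb4
  have bv: "b = \<i> * a" and cv: "c = - a" using Rb by (simp_all add: complex_eq_iff)
  have anz: "a \<noteq> 0"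
  proof
    assume "a = 0"
    then have "e = 0" using bv cv by (simp add: vec_eq_iff all_A3 a_def b_def c_def)
    with e_nz show False by simp
  qed
  define v0 where "v0 = v (ebas A0)"
  define v2 where "v2 = v (ebas A2)"
  have col: "(T *v ebas j) $ i = T $ i $ j" for i j
    by (simp add: matrix_vector_mult_def ebas_def sum_A3 all_A3) (cases j; simp)
  have H0: "ebas A0 \<in> Hm2" "ebas A2 \<in> Hm2" by (simp_all add: Hm2_def span_base)
  have C0: "T $ i $ A0 = ebas A0 $ i + v0 * e $ i" for i
    using T_H H0 col[of A0 i] by (simp add: v0_def)
  have C2: "T $ i $ A2 = ebas A2 $ i + v2 * e $ i" for i
    using T_H H0 col[of A2 i] by (simp add: v2_def)
  have Ce: "T $ i $ Am2 * a + T $ i $ A0 * b + T $ i $ A2 * c = e $ i" for i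
    using arg_cong[OF T_e, of "\<lambda>x. x $ i"]
    by (simp add: matrix_vector_mult_def sum_A3 a_def b_def c_def)
  have CA: "T $ i $ Am2 * a = e $ i - T $ i $ A0 * (\<i> * a) + T $ i $ A2 * a" for i
    using Ce[of i] bv cv by (simp add: algebra_simps)
  have CAm: "T $ i $ Am2 = e $ i / a - T $ i $ A0 * \<i> + T $ i $ A2" for i
    using CA[of i] anz by (simp add: field_simps)
  have "T = TT (a * v2) (a * v0)"
    by (simp add: vec_eq_iff all_A3 TT_def M3_nth CAm C0 C2 ebas_def anz
                  flip: a_def b_def c_def, simp add: bv cv anz field_simps)
  then show ?thesis using TT_Gamma by simp
qed

end
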